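(* Let $n$ be an even positive integer, $m\ge 2$ an integer, and $f$ an integer with $1\le f\le m/2$ and $\gcd(f,m)=1$. Let $G$ be the dense Random Integer Generation game with $n$ players, $m$ strategies and parameter $f$ (defined in the context). Let $\bar{\sigma}$ be the mixed strategy profile in which every player plays the uniform distribution $(1/m,\dots,1/m)$ on $\{0,1,\dots,m-1\}$. Then $\bar{\sigma}$ is an alliance-resistant Nash equilibrium of $G$, and it is the only Nash equilibrium of $G$.
   Context: A one-shot game with $n$ players consists of finite pure-strategy sets $S_1,\dots,S_n$ and utility functions $u_i : S_1\times\cdots\times S_n \to \mathbb{R}$; players choose simultaneously and independently. A mixed strategy for player $i$ is a probability distribution $\sigma_i$ on $S_i$; a mixed strategy profile is $\sigma=(\sigma_1,\dots,\sigma_n)$, and $u_i(\sigma)$ denotes the expected utility when each $s_i$ is drawn independently from $\sigma_i$. A profile $\sigma$ is a Nash equilibrium if for every player $i$ and every mixed strategy $\tilde\sigma_i$ of player $i$, $u_i(\sigma) \ge u_i(\tilde\sigma_i, \sigma_{-i})$. A profile $\sigma$ is an alliance-resistant Nash equilibrium if for every non-empty set $P$ of players and every choice of mixed strategies $\tilde\sigma_P$ for the members of $P$, $u_P(\sigma) \ge u_P(\tilde\sigma_P, \sigma_{-P})$, where $u_P$ is the sum of the utilities of the members of $P$. Define $g:\mathbb{Z}\to\{-1,0,1\}$ by: writing $l$ modulo $m$ as a representative in $\{0,\dots,m-1\}$, $g(l)=1$ if $0\le l\le f-1$, $g(l)=-1$ if $m-f\le l\le m-1$, and $g(l)=0$ otherwise.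 Let $B=B^{(m,f)}$ be the $m\times m$ matrix with rows and columns indexed by $\{0,\dots,m-1\}$ and entries $B_{a,b}=g(b-a)$. The dense RIG game: each player $i\in\{1,\dots,n\}$ has pure strategy set $\{0,1,\dots,m-1\}$; players are paired as $(2k-1,2k)$ for $k=1,\dots,n/2$; at outcome $s=(s_1,\dots,s_n)$ player $2k-1$ receives $B_{s_{2k-1},s_{2k}}$ and player $2k$ receives $-B_{s_{2k-1},s_{2k}}$. *)

theory Defs
  imports Complex_Main "HOL-Library.FuncSet"
begin

text \<open>A finite game in normal form is given by a finite set of players N,
pure-strategy sets S i (finite) and utilities u i :: (player => strategy) => real,
where a pure outcome is an element of PiE N S.\<close>

definition mixed_strategy :: "'a set \<Rightarrow> ('a \<Rightarrow> real) \<Rightarrow> bool" where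
  "mixed_strategy A p \<longleftrightarrow> (\<forall>x\<in>A. 0 \<le> p x) \<and> sum p A = 1"

definition mixed_profile :: "'p set \<Rightarrow> ('p \<Rightarrow> 'a set) \<Rightarrow> ('p \<Rightarrow> 'a \<Rightarrow> real) \<Rightarrow> bool" where
  "mixed_profile N S \<sigma> \<longleftrightarrow> (\<forall>i\<in>N. mixed_strategy (S i) (\<sigma> i))"

definition exp_util ::
  "'p set \<Rightarrow> ('p \<Rightarrow> 'a set) \<Rightarrow> ('p \<Rightarrow> ('p \<Rightarrow> 'a) \<Rightarrow> real) \<Rightarrow> ('p \<Rightarrow> 'a \<Rightarrow> real) \<Rightarrow> 'p \<Rightarrow> real" where
  "exp_util N S u \<sigma> i = (\<Sum>s\<in>PiE N S. (\<Prod>j\<in>N. \<sigma> j (s j)) * u i s)"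

definition deviate :: "'p set \<Rightarrow> ('p \<Rightarrow> 'a \<Rightarrow> real) \<Rightarrow> ('p \<Rightarrow> 'a \<Rightarrow> real) \<Rightarrow> ('p \<Rightarrow> 'a \<Rightarrow> real)" where
  "deviate P \<tau> \<sigma> = (\<lambda>j. if j \<in> P then \<tau> j else \<sigma> j)"

definition nash_equilibrium ::
  "'p set \<Rightarrow> ('p \<Rightarrow> 'a set) \<Rightarrow> ('p \<Rightarrow> ('p \<Rightarrow> 'a) \<Rightarrow> real) \<Rightarrow> ('p \<Rightarrow> 'a \<Rightarrow> real) \<Rightarrow> bool" where
  "nash_equilibrium N S u \<sigma> \<longleftrightarrow> mixed_profile N S \<sigma> \<and>
     (\<forall>i\<in>N. \<forall>p. mixed_strategy (S i) p \<longrightarrow>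
        exp_util N S u (\<sigma>(i := p)) i \<le> exp_util N S u \<sigma> i)"

definition alliance_resistant_NE ::
  "'p set \<Rightarrow> ('p \<Rightarrow> 'a set) \<Rightarrow> ('p \<Rightarrow> ('p \<Rightarrow> 'a) \<Rightarrow> real) \<Rightarrow> ('p \<Rightarrow> 'a \<Rightarrow> real) \<Rightarrow> bool" where
  "alliance_resistant_NE N S u \<sigma> \<longleftrightarrow> mixed_profile N S \<sigma> \<and>
     (\<forall>P. P \<subseteq> N \<longrightarrow> P \<noteq> {} \<longrightarrow> (\<forall>\<tau>. (\<forall>i\<in>P. mixed_strategy (S i) (\<tau> i)) \<longrightarrow>
        (\<Sum>i\<in>P. exp_util N S u (deviate P \<tau> \<sigma>) i) \<le> (\<Sum>i\<in>P. exp_util N S u \<sigma> i)))"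

definition rig_g :: "int \<Rightarrow> int \<Rightarrow> int \<Rightarrow> int" where
  "rig_g m f l = (let r = l mod m in
      if 0 \<le> r \<and> r \<le> f - 1 then 1 else if m - f \<le> r \<and> r \<le> m - 1 then -1 else 0)"

definition rig_B :: "nat \<Rightarrow> nat \<Rightarrow> nat \<Rightarrow> nat \<Rightarrow> int" where
  "rig_B m f a b = rig_g (int m) (int f) (int b - int a)"

definition rig_players :: "nat \<Rightarrow> nat set" where
  "rig_players n = {1..n}"

definition rig_strats :: "nat \<Rightarrow> nat \<Rightarrow> nat set" where
  "rig_strats m i = {0..<m}"

definition rig_util :: "nat \<Rightarrow> nat \<Rightarrow> nat \<Rightarrow> (nat \<Rightarrow> nat) \<Rightarrow> real" where
  "rig_util m f i s = (if odd i then real_of_int (rig_B m f (s i) (s (i + 1)))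
                       else - real_of_int (rig_B m f (s (i - 1)) (s i)))"

definition uniform_profile :: "nat \<Rightarrow> nat \<Rightarrow> nat \<Rightarrow> real" where
  "uniform_profile m i x = 1 / real m"

end

theory Submission
  imports Defs "HOL-Number_Theory.Cong"
begin

lemma sum_PiE_ind:
  fixes \<sigma> :: "'p \<Rightarrow> 'a \<Rightarrow> real"
  assumes N: "finite N" and fS: "\<And>j. j \<in> N \<Longrightarrow> finite (S j)"
    and i: "i \<in> N" and k: "k \<in> N" and ik: "i \<noteq> k" and x: "x \<in> S i" and y: "y \<in> S k"
    and one: "\<And>j. j \<in> N \<Longrightarrow> sum (\<sigma> j) (S j) = 1"
  shows "(\<Sum>s\<in>PiE N S. (\<Prod>j\<in>N. \<sigma> j (s j)) * (if s i = x \<and> s k = y then 1 else 0)) = \<sigma> i x * \<sigma> k y"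
proof -
  define \<tau> where "\<tau> j z = \<sigma> j z * (if j = i then (if z = x then 1 else 0) else 1)
      * (if j = k then (if z = y then 1 else 0) else 1)" for j z
  have 1: "(\<Prod>j\<in>N. \<sigma> j (s j)) * (if s i = x \<and> s k = y then 1 else 0) = (\<Prod>j\<in>N. \<tau> j (s j))" for s
  proof -
    have "(\<Prod>j\<in>N. \<tau> j (s j)) = (\<Prod>j\<in>N. \<sigma> j (s j)) * (\<Prod>j\<in>N. (if j = i then (if s j = x then 1 else 0) else 1))
       * (\<Prod>j\<in>N. (if j = k then (if s j = y then 1 else 0) else 1))"
      unfolding \<tau>_def prod.distrib by simp
    also have "(\<Prod>j\<in>N. (if j = i then (if s j = x then 1 else 0) else 1)) = (if s i = x then 1 else (0::real))"
      using prod.delta[OF N, of i "\<lambda>j. (if s j = x then 1 else (0::real))"] i by simp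
    also have "(\<Prod>j\<in>N. (if j = k then (if s j = y then 1 else 0) else 1)) = (if s k = y then 1 else (0::real))"
      using prod.delta[OF N, of k "\<lambda>j. (if s j = y then 1 else (0::real))"] k by simp
    finally show ?thesis by simp
  qed
  have "(\<Sum>s\<in>PiE N S. (\<Prod>j\<in>N. \<tau> j (s j))) = (\<Prod>j\<in>N. \<Sum>z\<in>S j. \<tau> j z)"
    by (rule prod_sum_PiE[symmetric]) (use N fS in auto)
  also have "\<dots> = (\<Prod>j\<in>N. if j = i then \<sigma> i x else if j = k then \<sigma> k y else 1)"
  proof (rule prod.cong[OF refl])
    fix j assume j: "j \<in> N"
    show "(\<Sum>z\<in>S j. \<tau> j z) = (if j = i then \<sigma> i x else if j = k then \<sigma> k y else 1)"
    proof (cases "j = i")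
      case True
      then have "(\<Sum>z\<in>S j. \<tau> j z) = (\<Sum>z\<in>S j. if z = x then \<sigma> i x else 0)"
        using ik by (intro sum.cong) (auto simp: \<tau>_def)
      also have "\<dots> = \<sigma> i x" using x True fS j by (simp add: sum.delta')
      finally show ?thesis using True by simp
    next
      case False
      show ?thesis
      proof (cases "j = k")
        case True
        then have "(\<Sum>z\<in>S j. \<tau> j z) = (\<Sum>z\<in>S j. if z = y then \<sigma> k y else 0)"
          using ik by (intro sum.cong) (auto simp: \<tau>_def)
        also have "\<dots> = \<sigma> k y" using y True fS j by (simp add: sum.delta')
        finally show ?thesis using True False by simp
      next
        case False2: False
        then show ?thesis using False one[OF j] by (simp add: \<tau>_def)
      qed
    qed
  qed
  also have "\<dots> = \<sigma> i x * \<sigma> k y"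
  proof -
    have "(\<Prod>j\<in>N. if j = i then \<sigma> i x else if j = k then \<sigma> k y else 1)
        = (\<Prod>j\<in>N. (if j = i then \<sigma> i x else 1) * (if j = k then \<sigma> k y else 1))"
      using ik by (intro prod.cong) auto
    also have "\<dots> = \<sigma> i x * \<sigma> k y" unfolding prod.distrib
      using prod.delta[OF N, of i "\<lambda>_. \<sigma> i x"] prod.delta[OF N, of k "\<lambda>_. \<sigma> k y"] i k by simp
    finally show ?thesis .
  qed
  finally show ?thesis using 1 by simp
qed


lemma g_val:
  assumes "l < m" "2 * f \<le> m"
  shows "rig_g (int m) (int f) (int l) = (if l < f then 1 else if m - f \<le> l then -1 else 0)"
  using assms by (auto simp: rig_g_def Let_def)

lemma periodic_shift:
  fixes F :: "int \<Rightarrow> real"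
  assumes per: "\<And>z. F z = F (z mod int m)" and st: "\<And>b. F (b + int f) = F b"
    and cop: "coprime f m"
  shows "F (b + 1) = F b"
proof -
  have it: "F (b + int k * int f) = F b" for k b
  proof (induction k arbitrary: b)
    case 0 then show ?case by simp
  next
    case (Suc k)
    have "F (b + int (Suc k) * int f) = F ((b + int k * int f) + int f)" by (simp add: algebra_simps)
    also have "\<dots> = F (b + int k * int f)" by (rule st)
    finally show ?case using Suc by simp
  qed
  obtain k where k: "[f * k = 1] (mod m)" using cong_solve_coprime_nat[OF cop] by auto
  then have "[int f * int k = 1] (mod int m)" by (metis cong_int_iff of_nat_1 of_nat_mult)
  then have "(b + int k * int f) mod int m = (b + 1) mod int m"
    by (metis cong_add_lcancel_0 cong_def cong_add mult.commute cong_refl add.commute)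
  then have "F (b + int k * int f) = F (b + 1)" using per by metis
  then show ?thesis using it by simp
qed

lemma conv_split:
  fixes R :: "int \<Rightarrow> real"
  assumes "2 * f \<le> m"
  shows "(\<Sum>l\<in>{0..<m}. real_of_int (rig_g (int m) (int f) (int l)) * R (b - int l))
     = (\<Sum>l\<in>{0..<f}. R (b - int l)) - (\<Sum>l\<in>{0..<f}. R (b - int (l + (m - f))))"
proof -
  let ?h = "\<lambda>l. real_of_int (rig_g (int m) (int f) (int l)) * R (b - int l)"
  have "sum ?h {0..<m} = sum ?h {0..<f} + sum ?h {f..<m-f} + sum ?h {m-f..<m}"
    using assms by (simp add: sum.atLeastLessThan_concat)
  also have "sum ?h {0..<f} = (\<Sum>l\<in>{0..<f}. R (b - int l))"
    using assms by (intro sum.cong) (auto simp: g_val)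
  also have "sum ?h {f..<m-f} = 0"
    using assms by (intro sum.neutral) (auto simp: g_val)
  also have "sum ?h {m-f..<m} = (\<Sum>l\<in>{m-f..<m}. - R (b - int l))"
    using assms by (intro sum.cong) (auto simp: g_val)
  also have "\<dots> = - (\<Sum>l\<in>{0 + (m-f)..<f + (m-f)}. R (b - int l))"
    using assms by (simp add: sum_negf)
  also have "(\<Sum>l\<in>{0 + (m-f)..<f + (m-f)}. R (b - int l)) = (\<Sum>l\<in>{0..<f}. R (b - int (l + (m - f))))"
    by (rule sum.shift_bounds_nat_ivl)
  finally show ?thesis by simp
qed

lemma conv_zero_const:
  fixes R :: "int \<Rightarrow> real"
  assumes per: "\<And>z. R z = R (z mod int m)" and f1: "1 \<le> f" and fm: "2 * f \<le> m"
    and cop: "coprime f m"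
    and conv: "\<And>b. (\<Sum>l\<in>{0..<m}. real_of_int (rig_g (int m) (int f) (int l)) * R (b - int l)) = 0"
  shows "R z = R 0"
proof -
  define W where "W b = (\<Sum>l\<in>{0..<f}. R (b - int l))" for b
  have perm: "R (z + int m) = R z" for z using per[of "z + int m"] per[of z] by simp
  have Wper: "W z = W (z mod int m)" for z
    unfolding W_def by (intro sum.cong refl) (metis per mod_diff_left_eq)
  have Wst: "W (b + int f) = W b" for b
  proof -
    have "(\<Sum>l\<in>{0..<f}. R (b - int (l + (m - f)))) = W (b + int f)"
      unfolding W_def
    proof (intro sum.cong refl)
      fix l assume "l \<in> {0..<f}"
      have "b - int (l + (m - f)) + int m = b + int f - int l" using fm by (simp add: of_nat_diff)
      then show "R (b - int (l + (m - f))) = R (b + int f - int l)" using perm by metis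
    qed
    then show ?thesis using conv[of b] conv_split[OF fm, of R b] unfolding W_def
      by simp
  qed
  have W1: "W (b + 1) = W b" for b by (rule periodic_shift[OF Wper Wst cop])
  have Rst: "R (c + int f) = R c" for c
  proof -
    obtain k where fk: "f = Suc k" using f1 by (cases f) auto
    have "W (c + int f) = R (c + int f) + (\<Sum>l<k. R (c + int f - int (Suc l)))"
      unfolding W_def fk atLeast0LessThan by (subst sum.lessThan_Suc_shift) simp
    moreover have "W (c + int f - 1) = (\<Sum>l<k. R (c + int f - 1 - int l)) + R (c + int f - 1 - int k)"
      unfolding W_def fk atLeast0LessThan by simp
    moreover have "W (c + int f) = W (c + int f - 1)" using W1[of "c + int f - 1"] by simp
    ultimately show ?thesis using fk by (simp add: algebra_simps)
  qed
  have R1: "R (b + 1) = R b" for b by (rule periodic_shift[OF per Rst cop])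
  have Rn: "R (int k) = R 0" for k
  proof (induction k)
    case (Suc k) then show ?case using R1[of "int k"] by (simp add: add.commute)
  qed simp
  have "R z = R (int (nat (z mod int m)))" using per[of z] fm f1 by simp
  then show ?thesis using Rn by metis
qed


lemma g_per: "rig_g (int m) (int f) (z mod int m) = rig_g (int m) (int f) z"
  by (simp add: rig_g_def)

lemma sum_shift_plus:
  fixes h :: "int \<Rightarrow> real"
  assumes per: "\<And>z. h z = h (z mod int m)" and m: "0 < m"
  shows "(\<Sum>y\<in>{0..<m}. h (int y + c)) = (\<Sum>y\<in>{0..<m}. h (int y))"
proof (rule sum.reindex_bij_witness[of _ "\<lambda>l. nat ((int l - c) mod int m)" "\<lambda>y. nat ((int y + c) mod int m)"])
  fix a assume a: "a \<in> {0..<m}"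
  have "((int a - c) mod int m + c) mod int m = int a mod int m" by (simp add: mod_simps)
  then show "nat ((int (nat ((int a - c) mod int m)) + c) mod int m) = a" using a m by simp
next
  fix a assume a: "a \<in> {0..<m}"
  show "nat ((int a - c) mod int m) \<in> {0..<m}" using m by (simp add: nat_less_iff)
next
  fix a assume a: "a \<in> {0..<m}"
  have "((int a + c) mod int m - c) mod int m = int a mod int m" by (simp add: mod_simps)
  then show "nat ((int (nat ((int a + c) mod int m)) - c) mod int m) = a" using a m by simp
next
  fix a assume a: "a \<in> {0..<m}"
  show "nat ((int a + c) mod int m) \<in> {0..<m}" using m by (simp add: nat_less_iff)
next
  fix a assume a: "a \<in> {0..<m}"
  show "h (int (nat ((int a + c) mod int m))) = h (int a + c)" using m per[of "int a + c"] by simp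
qed

lemma sum_shift_minus:
  fixes h :: "int \<Rightarrow> real"
  assumes per: "\<And>z. h z = h (z mod int m)" and m: "0 < m"
  shows "(\<Sum>y\<in>{0..<m}. h (c - int y)) = (\<Sum>y\<in>{0..<m}. h (int y))"
proof (rule sum.reindex_bij_witness[of _ "\<lambda>l. nat ((c - int l) mod int m)" "\<lambda>y. nat ((c - int y) mod int m)"])
  fix a assume a: "a \<in> {0..<m}"
  have "(c - (c - int a) mod int m) mod int m = int a mod int m" by (simp add: mod_simps)
  then show "nat ((c - int (nat ((c - int a) mod int m))) mod int m) = a" using a m by simp
next
  fix a assume a: "a \<in> {0..<m}"
  show "nat ((c - int a) mod int m) \<in> {0..<m}" using m by (simp add: nat_less_iff)
next
  fix a assume a: "a \<in> {0..<m}"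
  have "(c - (c - int a) mod int m) mod int m = int a mod int m" by (simp add: mod_simps)
  then show "nat ((c - int (nat ((c - int a) mod int m))) mod int m) = a" using a m by simp
next
  fix a assume a: "a \<in> {0..<m}"
  show "nat ((c - int a) mod int m) \<in> {0..<m}" using m by (simp add: nat_less_iff)
next
  fix a assume a: "a \<in> {0..<m}"
  show "h (int (nat ((c - int a) mod int m))) = h (c - int a)" using m per[of "c - int a"] by simp
qed

lemma g_sum_zero:
  assumes "2 * f \<le> m"
  shows "(\<Sum>l\<in>{0..<m}. real_of_int (rig_g (int m) (int f) (int l))) = 0"
  using conv_split[OF assms, of "\<lambda>_. 1" 0] by simp

lemma row_sum:
  assumes "2 * f \<le> m" "0 < m"
  shows "(\<Sum>y\<in>{0..<m}. real_of_int (rig_B m f x y)) = 0"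
proof -
  have "(\<Sum>y\<in>{0..<m}. real_of_int (rig_B m f x y))
      = (\<Sum>y\<in>{0..<m}. real_of_int (rig_g (int m) (int f) (int y + - int x)))"
    by (simp add: rig_B_def)
  also have "\<dots> = (\<Sum>y\<in>{0..<m}. real_of_int (rig_g (int m) (int f) (int y)))"
    by (rule sum_shift_plus[where h = "\<lambda>z. real_of_int (rig_g (int m) (int f) z)"]) (use assms g_per in auto)
  finally show ?thesis using g_sum_zero[OF assms(1)] by simp
qed

lemma col_sum:
  assumes "2 * f \<le> m" "0 < m"
  shows "(\<Sum>x\<in>{0..<m}. real_of_int (rig_B m f x y)) = 0"
proof -
  have "(\<Sum>x\<in>{0..<m}. real_of_int (rig_B m f x y))
      = (\<Sum>x\<in>{0..<m}. real_of_int (rig_g (int m) (int f) (int y - int x)))"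
    by (simp add: rig_B_def)
  also have "\<dots> = (\<Sum>y\<in>{0..<m}. real_of_int (rig_g (int m) (int f) (int y)))"
    by (rule sum_shift_minus[where h = "\<lambda>z. real_of_int (rig_g (int m) (int f) z)"]) (use assms g_per in auto)
  finally show ?thesis using g_sum_zero[OF assms(1)] by simp
qed

definition pay :: "nat \<Rightarrow> nat \<Rightarrow> (nat \<Rightarrow> real) \<Rightarrow> (nat \<Rightarrow> real) \<Rightarrow> real" where
  "pay m f p q = (\<Sum>x\<in>{0..<m}. \<Sum>y\<in>{0..<m}. p x * q y * real_of_int (rig_B m f x y))"

lemma pay_unif_right:
  assumes "2 * f \<le> m" "0 < m"
  shows "pay m f p (uniform_profile m j) = 0"
proof -
  have "pay m f p (uniform_profile m j) = (\<Sum>x\<in>{0..<m}. p x / real m * (\<Sum>y\<in>{0..<m}. real_of_int (rig_B m f x y)))"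
    unfolding pay_def uniform_profile_def by (simp add: sum_distrib_left)
  then show ?thesis using row_sum[OF assms] by simp
qed

lemma pay_unif_left:
  assumes "2 * f \<le> m" "0 < m"
  shows "pay m f (uniform_profile m j) q = 0"
proof -
  have "pay m f (uniform_profile m j) q = (\<Sum>y\<in>{0..<m}. q y / real m * (\<Sum>x\<in>{0..<m}. real_of_int (rig_B m f x y)))"
    unfolding pay_def uniform_profile_def by (subst sum.swap) (simp add: sum_distrib_left)
  then show ?thesis using col_sum[OF assms] by simp
qed


lemma util_pair:
  fixes \<rho> :: "nat \<Rightarrow> nat \<Rightarrow> real"
  assumes i: "a \<in> rig_players n" and k: "k \<in> rig_players n" and ik: "a \<noteq> k"
    and one: "\<And>j. j \<in> rig_players n \<Longrightarrow> sum (\<rho> j) {0..<m} = 1"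
    and u: "\<And>s. s \<in> PiE (rig_players n) (rig_strats m) \<Longrightarrow> rig_util m f i s = c * real_of_int (rig_B m f (s a) (s k))"
  shows "exp_util (rig_players n) (rig_strats m) (rig_util m f) \<rho> i = c * pay m f (\<rho> a) (\<rho> k)"
proof -
  let ?N = "rig_players n" and ?S = "rig_strats m"
  have fin: "finite ?N" by (simp add: rig_players_def)
  have "exp_util ?N ?S (rig_util m f) \<rho> i = (\<Sum>s\<in>PiE ?N ?S. (\<Prod>j\<in>?N. \<rho> j (s j)) *
        (\<Sum>x\<in>{0..<m}. \<Sum>y\<in>{0..<m}. (if s a = x \<and> s k = y then 1 else 0) * (c * real_of_int (rig_B m f x y))))"
    unfolding exp_util_def
  proof (intro sum.cong refl)
    fix s assume s: "s \<in> PiE ?N ?S"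
    have si: "s a \<in> {0..<m}" "s k \<in> {0..<m}" using s i k by (auto simp: rig_strats_def)
    have "(\<Sum>x\<in>{0..<m}. \<Sum>y\<in>{0..<m}. (if s a = x \<and> s k = y then 1 else 0) * (c * real_of_int (rig_B m f x y)))
        = (\<Sum>x\<in>{0..<m}. if x = s a then (\<Sum>y\<in>{0..<m}. (if s k = y then 1 else 0) * (c * real_of_int (rig_B m f x y))) else 0)"
      by (intro sum.cong refl) auto
    also have "\<dots> = (\<Sum>y\<in>{0..<m}. (if s k = y then 1 else 0) * (c * real_of_int (rig_B m f (s a) y)))"
      using si by (simp add: sum.delta')
    also have "\<dots> = (\<Sum>y\<in>{0..<m}. if y = s k then c * real_of_int (rig_B m f (s a) (s k)) else 0)"
      by (intro sum.cong refl) auto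
    also have "\<dots> = c * real_of_int (rig_B m f (s a) (s k))" using si by (simp add: sum.delta')
    finally show "(\<Prod>j\<in>?N. \<rho> j (s j)) * rig_util m f i s = (\<Prod>j\<in>?N. \<rho> j (s j)) *
        (\<Sum>x\<in>{0..<m}. \<Sum>y\<in>{0..<m}. (if s a = x \<and> s k = y then 1 else 0) * (c * real_of_int (rig_B m f x y)))"
      using u[OF s] by simp
  qed
  also have "\<dots> = (\<Sum>x\<in>{0..<m}. \<Sum>y\<in>{0..<m}. c * real_of_int (rig_B m f x y) *
        (\<Sum>s\<in>PiE ?N ?S. (\<Prod>j\<in>?N. \<rho> j (s j)) * (if s a = x \<and> s k = y then 1 else 0)))"
    by (simp add: sum_distrib_left sum_distrib_right sum.swap[of _ "PiE ?N ?S"] algebra_simps)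
  also have "\<dots> = (\<Sum>x\<in>{0..<m}. \<Sum>y\<in>{0..<m}. c * real_of_int (rig_B m f x y) * (\<rho> a x * \<rho> k y))"
    by (intro sum.cong refl, subst sum_PiE_ind) (use fin i k ik one in \<open>auto simp: rig_strats_def\<close>)
  also have "\<dots> = c * pay m f (\<rho> a) (\<rho> k)"
    unfolding pay_def by (simp add: sum_distrib_left algebra_simps)
  finally show ?thesis .
qed

lemma util_odd:
  assumes n: "even n" and i: "i \<in> rig_players n" and oi: "odd i"
    and one: "\<And>j. j \<in> rig_players n \<Longrightarrow> sum (\<rho> j) {0..<m} = 1"
  shows "exp_util (rig_players n) (rig_strats m) (rig_util m f) \<rho> i = pay m f (\<rho> i) (\<rho> (i+1))"
proof -
  have "i + 1 \<in> rig_players n" using i n oi unfolding rig_players_def atLeastAtMost_iff by presburger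
  then show ?thesis using util_pair[of i n "i+1" \<rho> m f i 1] i one oi by (simp add: rig_util_def)
qed

lemma util_even:
  assumes n: "even n" and i: "i \<in> rig_players n" and oi: "even i"
    and one: "\<And>j. j \<in> rig_players n \<Longrightarrow> sum (\<rho> j) {0..<m} = 1"
  shows "exp_util (rig_players n) (rig_strats m) (rig_util m f) \<rho> i = - pay m f (\<rho> (i-1)) (\<rho> i)"
proof -
  have "i - 1 \<in> rig_players n" "i \<ge> 2" using i n oi unfolding rig_players_def atLeastAtMost_iff by presburger+
  then show ?thesis using util_pair[of "i-1" n i \<rho> m f i "-1"] i one oi
    by (simp add: rig_util_def)
qed


lemma const_unif:
  fixes p :: "nat \<Rightarrow> real"
  assumes c: "\<And>x. x < m \<Longrightarrow> p x = p 0" and s: "sum p {0..<m} = 1" and x: "x < m"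
  shows "p x = 1 / real m"
proof -
  have "sum p {0..<m} = sum (\<lambda>_. p 0) {0..<m}" by (rule sum.cong) (auto intro: c)
  then have "sum p {0..<m} = real m * p 0" by simp
  then have "real m * p 0 = 1" using s by simp
  moreover have "real m \<noteq> 0" using x by simp
  ultimately show ?thesis using c[OF x] by (simp add: field_simps)
qed

lemma col_zero_unif:
  fixes p :: "nat \<Rightarrow> real"
  assumes f1: "1 \<le> f" and fm: "2 * f \<le> m" and cop: "coprime f m"
    and col: "\<And>b. b < m \<Longrightarrow> (\<Sum>x\<in>{0..<m}. p x * real_of_int (rig_B m f x b)) = 0"
    and s: "sum p {0..<m} = 1" and x: "x < m"
  shows "p x = 1 / real m"
proof -
  have m: "0 < m" using f1 fm by simp
  define R where "R z = p (nat (z mod int m))" for z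
  have Rper: "R z = R (z mod int m)" for z unfolding R_def by simp
  have conv: "(\<Sum>l\<in>{0..<m}. real_of_int (rig_g (int m) (int f) (int l)) * R (b - int l)) = 0" for b
  proof -
    define h where "h z = real_of_int (rig_g (int m) (int f) z) * R (b - z)" for z
    have hper: "h z = h (z mod int m)" for z
    proof -
      have "R (b - z mod int m) = R (b - z)"
        using Rper[of "b - z mod int m"] Rper[of "b - z"] mod_diff_right_eq[of b z "int m"] by metis
      then show ?thesis unfolding h_def by (simp add: g_per)
    qed
    have "(\<Sum>l\<in>{0..<m}. h (int l)) = (\<Sum>y\<in>{0..<m}. h (b - int y))"
      by (rule sum_shift_minus[where h=h and m=m and c=b, OF hper m, symmetric])
    also have "\<dots> = (\<Sum>x\<in>{0..<m}. p x * real_of_int (rig_B m f x (nat (b mod int m))))"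
    proof (intro sum.cong refl)
      fix y assume y: "y \<in> {0..<m}"
      have "rig_g (int m) (int f) (b - int y) = rig_g (int m) (int f) ((b mod int m - int y) mod int m)"
        using g_per[of m f "b - int y"] mod_diff_left_eq[of b "int m" "int y"] by metis
      also have "\<dots> = rig_g (int m) (int f) (b mod int m - int y)" by (rule g_per)
      finally show "h (b - int y) = p y * real_of_int (rig_B m f y (nat (b mod int m)))"
        using y m unfolding h_def R_def rig_B_def by simp
    qed
    also have "\<dots> = 0" using m by (intro col) (simp add: nat_less_iff)
    finally show ?thesis unfolding h_def by simp
  qed
  have "R z = R 0" for z by (rule conv_zero_const[OF Rper f1 fm cop conv])
  then have "p y = p 0" if "y < m" for y
  proof -
    have "R (int y) = p y" using that unfolding R_def by simp
    then show ?thesis using \<open>\<And>z. R z = R 0\<close> unfolding R_def by simp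
  qed
  then show ?thesis using const_unif s x by blast
qed

lemma row_zero_unif:
  fixes q :: "nat \<Rightarrow> real"
  assumes f1: "1 \<le> f" and fm: "2 * f \<le> m" and cop: "coprime f m"
    and row: "\<And>a. a < m \<Longrightarrow> (\<Sum>y\<in>{0..<m}. q y * real_of_int (rig_B m f a y)) = 0"
    and s: "sum q {0..<m} = 1" and x: "x < m"
  shows "q x = 1 / real m"
proof -
  have m: "0 < m" using f1 fm by simp
  define Q where "Q z = q (nat (z mod int m))" for z
  define R where "R z = Q (- z)" for z
  have Rper: "R z = R (z mod int m)" for z unfolding R_def Q_def by (simp add: mod_minus_eq)
  have conv: "(\<Sum>l\<in>{0..<m}. real_of_int (rig_g (int m) (int f) (int l)) * R (b - int l)) = 0" for b
  proof -
    define h where "h z = real_of_int (rig_g (int m) (int f) z) * Q (z - b)" for z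
    have hper: "h z = h (z mod int m)" for z
    proof -
      have "Q (z mod int m - b) = Q (z - b)" unfolding Q_def using mod_diff_left_eq[of z "int m" b] by simp
      then show ?thesis unfolding h_def by (simp add: g_per)
    qed
    have "(\<Sum>l\<in>{0..<m}. h (int l)) = (\<Sum>y\<in>{0..<m}. h (int y + b))"
      by (rule sum_shift_plus[where h=h and m=m and c=b, OF hper m, symmetric])
    also have "\<dots> = (\<Sum>y\<in>{0..<m}. q y * real_of_int (rig_B m f (nat ((- b) mod int m)) y))"
    proof (intro sum.cong refl)
      fix y assume y: "y \<in> {0..<m}"
      have "rig_g (int m) (int f) (int y + b) = rig_g (int m) (int f) ((int y - (- b) mod int m) mod int m)"
        using g_per[of m f "int y + b"] mod_diff_right_eq[of "int y" "- b" "int m"] by simp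
      also have "\<dots> = rig_g (int m) (int f) (int y - (- b) mod int m)" by (rule g_per)
      finally show "h (int y + b) = q y * real_of_int (rig_B m f (nat ((- b) mod int m)) y)"
        using y m unfolding h_def Q_def rig_B_def by simp
    qed
    also have "\<dots> = 0" using m by (intro row) (simp add: nat_less_iff)
    finally show ?thesis unfolding h_def R_def by (simp add: mult.commute)
  qed
  have "R z = R 0" for z by (rule conv_zero_const[OF Rper f1 fm cop conv])
  then have "q y = q 0" if "y < m" for y
  proof -
    have "R (- int y) = q y" using that unfolding R_def Q_def by simp
    moreover have "R 0 = q 0" unfolding R_def Q_def by simp
    ultimately show ?thesis using \<open>\<And>z. R z = R 0\<close> by metis
  qed
  then show ?thesis using const_unif s x by blast
qed


lemma pay_delta_right:
  assumes b: "b < m"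
  shows "pay m f p (\<lambda>y. if y = b then 1 else 0) = (\<Sum>x\<in>{0..<m}. p x * real_of_int (rig_B m f x b))"
  unfolding pay_def
proof (intro sum.cong refl)
  fix x
  have "(\<Sum>y\<in>{0..<m}. p x * (if y = b then 1 else 0) * real_of_int (rig_B m f x y))
      = (\<Sum>y\<in>{0..<m}. if y = b then p x * real_of_int (rig_B m f x b) else 0)"
    by (intro sum.cong) auto
  then show "(\<Sum>y\<in>{0..<m}. p x * (if y = b then 1 else 0) * real_of_int (rig_B m f x y))
      = p x * real_of_int (rig_B m f x b)" using b by (simp add: sum.delta)
qed

lemma pay_delta_left:
  assumes a: "a < m"
  shows "pay m f (\<lambda>x. if x = a then 1 else 0) q = (\<Sum>y\<in>{0..<m}. q y * real_of_int (rig_B m f a y))"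
proof -
  have "pay m f (\<lambda>x. if x = a then 1 else 0) q
     = (\<Sum>x\<in>{0..<m}. if x = a then (\<Sum>y\<in>{0..<m}. q y * real_of_int (rig_B m f a y)) else 0)"
    unfolding pay_def by (intro sum.cong refl) auto
  then show ?thesis using a by (simp add: sum.delta)
qed

lemma delta_mixed: "(b::nat) < m \<Longrightarrow> mixed_strategy {0..<m} (\<lambda>y. if y = b then 1 else (0::real))"
proof -
  assume b: "b < m"
  have "(\<Sum>y\<in>{0..<m}. if y = b then 1 else (0::real)) = 1"
    by (subst sum.delta) (use b in auto)
  then show ?thesis unfolding mixed_strategy_def by simp
qed

lemma pair_unif:
  assumes n: "even n" and f1: "1 \<le> f" and fm: "2 * f \<le> m" and cop: "coprime f m"
    and a: "a \<in> rig_players n" and oa: "odd a"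
    and ne: "nash_equilibrium (rig_players n) (rig_strats m) (rig_util m f) \<sigma>"
    and x: "x < m"
  shows "\<sigma> a x = 1 / real m \<and> \<sigma> (a + 1) x = 1 / real m"
proof -
  let ?N = "rig_players n" and ?S = "rig_strats m" and ?u = "rig_util m f"
  have m: "0 < m" using f1 fm by simp
  have k: "a + 1 \<in> ?N" using a n oa unfolding rig_players_def atLeastAtMost_iff by presburger
  have ek: "even (a + 1)" using oa by simp
  have mp: "mixed_profile ?N ?S \<sigma>" and br: "\<And>i p. i \<in> ?N \<Longrightarrow> mixed_strategy (?S i) p \<Longrightarrow>
        exp_util ?N ?S ?u (\<sigma>(i := p)) i \<le> exp_util ?N ?S ?u \<sigma> i"
    using ne unfolding nash_equilibrium_def by auto
  have one: "\<And>j. j \<in> ?N \<Longrightarrow> sum (\<sigma> j) {0..<m} = 1"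
    using mp by (simp add: mixed_profile_def mixed_strategy_def rig_strats_def)
  let ?p = "\<sigma> a" and ?q = "\<sigma> (a+1)"
  define v where "v = pay m f ?p ?q"
  define col where "col b = (\<Sum>x\<in>{0..<m}. ?p x * real_of_int (rig_B m f x b))" for b
  define row where "row b = (\<Sum>y\<in>{0..<m}. ?q y * real_of_int (rig_B m f b y))" for b
  let ?d = "\<lambda>b. (\<lambda>y. if y = b then 1 else (0::real))"
  have vk: "exp_util ?N ?S ?u \<sigma> (a+1) = - v" unfolding v_def
    using util_even[OF n k ek one] by simp
  have va: "exp_util ?N ?S ?u \<sigma> a = v" unfolding v_def
    using util_odd[OF n a oa one] by simp
  have colv: "v \<le> col b" if b: "b < m" for b
  proof -
    have one': "\<And>j. j \<in> ?N \<Longrightarrow> sum ((\<sigma>(a+1 := ?d b)) j) {0..<m} = 1"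
      using one b by (simp add: sum.delta)
    have "exp_util ?N ?S ?u (\<sigma>(a+1 := ?d b)) (a+1) = - pay m f ?p (?d b)"
      using util_even[where \<rho>="\<sigma>(a+1 := ?d b)", OF n k ek one'] by simp
    also have "\<dots> = - col b" unfolding col_def using pay_delta_right[OF b] by simp
    finally have "- col b \<le> - v" using br[OF k, of "?d b"] delta_mixed[OF b] vk
      by (simp add: rig_strats_def)
    then show ?thesis by simp
  qed
  have rowv: "row b \<le> v" if b: "b < m" for b
  proof -
    have one': "\<And>j. j \<in> ?N \<Longrightarrow> sum ((\<sigma>(a := ?d b)) j) {0..<m} = 1"
      using one b by (simp add: sum.delta)
    have "exp_util ?N ?S ?u (\<sigma>(a := ?d b)) a = pay m f (?d b) ?q"
      using util_odd[where \<rho>="\<sigma>(a := ?d b)", OF n a oa one'] by simp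
    also have "\<dots> = row b" unfolding row_def using pay_delta_left[OF b] by simp
    finally show "row b \<le> v" using br[OF a, of "?d b"] delta_mixed[OF b] va
      by (simp add: rig_strats_def)
  qed
  have colsum: "(\<Sum>b\<in>{0..<m}. col b) = 0"
  proof -
    have "(\<Sum>b\<in>{0..<m}. col b) = (\<Sum>x\<in>{0..<m}. ?p x * (\<Sum>b\<in>{0..<m}. real_of_int (rig_B m f x b)))"
      unfolding col_def by (subst sum.swap) (simp add: sum_distrib_left)
    then show ?thesis using row_sum[OF fm m] by simp
  qed
  have rowsum: "(\<Sum>b\<in>{0..<m}. row b) = 0"
  proof -
    have "(\<Sum>b\<in>{0..<m}. row b) = (\<Sum>y\<in>{0..<m}. ?q y * (\<Sum>b\<in>{0..<m}. real_of_int (rig_B m f b y)))"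
      unfolding row_def by (subst sum.swap) (simp add: sum_distrib_left)
    then show ?thesis using col_sum[OF fm m] by simp
  qed
  have "(\<Sum>b\<in>{0..<m}. v) \<le> (\<Sum>b\<in>{0..<m}. col b)" by (rule sum_mono) (use colv in auto)
  then have v1: "v \<le> 0" using colsum m by (simp add: mult_le_0_iff)
  have "(\<Sum>b\<in>{0..<m}. row b) \<le> (\<Sum>b\<in>{0..<m}. v)" by (rule sum_mono) (use rowv in auto)
  then have v2: "0 \<le> v" using rowsum m by (simp add: zero_le_mult_iff)
  have c0: "col b = 0" if "b < m" for b
  proof -
    have "\<forall>b\<in>{0..<m}. 0 \<le> col b" using colv v1 v2 by force
    then have "\<forall>b\<in>{0..<m}. col b = 0" using colsum sum_nonneg_eq_0_iff[of "{0..<m}" col] by simp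
    then show ?thesis using that by simp
  qed
  have r0: "row b = 0" if "b < m" for b
  proof -
    have "\<forall>b\<in>{0..<m}. 0 \<le> - row b" using rowv v1 v2 by force
    then have "\<forall>b\<in>{0..<m}. - row b = 0" using rowsum sum_nonneg_eq_0_iff[of "{0..<m}" "\<lambda>b. - row b"]
      by (simp add: sum_negf)
    then show ?thesis using that by simp
  qed
  have "?p x = 1 / real m"
    by (rule col_zero_unif[OF f1 fm cop _ _ x]) (use c0 one a in \<open>auto simp: col_def\<close>)
  moreover have "?q x = 1 / real m"
    by (rule row_zero_unif[OF f1 fm cop _ _ x]) (use r0 one k in \<open>auto simp: row_def\<close>)
  ultimately show ?thesis by simp
qed


theorem mainTheorem2:
  fixes n m f :: nat
  assumes "even n" and "0 < n" and "2 \<le> m" and "1 \<le> f" and "2 * f \<le> m"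
    and "gcd f m = 1"
  shows "alliance_resistant_NE (rig_players n) (rig_strats m) (rig_util m f) (uniform_profile m)
       \<and> (\<forall>\<sigma>. nash_equilibrium (rig_players n) (rig_strats m) (rig_util m f) \<sigma> \<longrightarrow>
              (\<forall>i\<in>rig_players n. \<forall>x\<in>rig_strats m i. \<sigma> i x = uniform_profile m i x))"
proof
  note n = assms(1) and f1 = assms(4) and fm = assms(5)
  have cop: "coprime f m" using assms(6) by (simp add: coprime_iff_gcd_eq_1)
  have m: "0 < m" using assms by simp
  let ?N = "rig_players n" and ?S = "rig_strats m" and ?u = "rig_util m f" and ?U = "uniform_profile m"
  have finN: "finite ?N" by (simp add: rig_players_def)
  have unif_mixed: "mixed_strategy {0..<m} (?U j)" for j
    using m unfolding mixed_strategy_def uniform_profile_def by simp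
  define pt where "pt i = (if odd i then i+1 else i-1)" for i :: nat
  have ptN: "pt i \<in> ?N" if "i \<in> ?N" for i
    using that n unfolding pt_def rig_players_def atLeastAtMost_iff by presburger
  have ptpt: "pt (pt i) = i" if "i \<in> ?N" for i
    using that unfolding pt_def rig_players_def atLeastAtMost_iff by presburger
  have ev_odd: "even i \<Longrightarrow> i \<in> ?N \<Longrightarrow> odd (i - 1) \<and> i - 1 \<in> ?N \<and> i - 1 + 1 = i" for i
    using n unfolding rig_players_def atLeastAtMost_iff by presburger
  show "alliance_resistant_NE ?N ?S ?u ?U"
    unfolding alliance_resistant_NE_def
  proof (intro conjI allI impI)
    show "mixed_profile ?N ?S ?U" using unif_mixed by (simp add: mixed_profile_def rig_strats_def)
  next
    fix P \<tau> assume PN: "P \<subseteq> ?N" and "P \<noteq> {}" and tau: "\<forall>i\<in>P. mixed_strategy (?S i) (\<tau> i)"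
    define \<rho> where "\<rho> = deviate P \<tau> ?U"
    have one: "sum (\<rho> j) {0..<m} = 1" if "j \<in> ?N" for j
      using tau unif_mixed[of j] unfolding \<rho>_def deviate_def mixed_strategy_def rig_strats_def by auto
    have oneU: "sum (?U j) {0..<m} = 1" for j using unif_mixed[of j] by (simp add: mixed_strategy_def)
    define e where "e i = exp_util ?N ?S ?u \<rho> i" for i
    have eneg: "e (pt i) = - e i" if i: "i \<in> ?N" for i
    proof (cases "odd i")
      case True
      have "i + 1 \<in> ?N" using ptN[OF i] True by (simp add: pt_def)
      then show ?thesis using util_odd[OF n i True one] util_even[OF n \<open>i+1 \<in> ?N\<close> _ one] True
        unfolding e_def pt_def by simp
    next
      case False
      have h: "odd (i - 1) \<and> i - 1 \<in> ?N \<and> i - 1 + 1 = i" using ev_odd[OF _ i] False by simp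
      then show ?thesis using util_even[OF n i _ one] util_odd[of n "i-1" \<rho> m f, OF n _ _ one] False
        unfolding e_def pt_def by simp
    qed
    have ezero: "e i = 0" if i: "i \<in> ?N" and np: "pt i \<notin> P" for i
    proof (cases "odd i")
      case True
      have "\<rho> (i+1) = ?U (i+1)" using np True unfolding \<rho>_def deviate_def pt_def by simp
      then show ?thesis using util_odd[OF n i True one] pay_unif_right[OF fm m] unfolding e_def by simp
    next
      case False
      have "\<rho> (i-1) = ?U (i-1)" using np False unfolding \<rho>_def deviate_def pt_def by simp
      then show ?thesis using util_even[OF n i _ one] False pay_unif_left[OF fm m] unfolding e_def by simp
    qed
    define h where "h i = (if i \<in> P \<and> pt i \<in> P then e i else 0)" for i
    have "(\<Sum>i\<in>P. e i) = (\<Sum>i\<in>P. h i)"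
      using ezero PN unfolding h_def by (intro sum.cong refl) auto
    also have "\<dots> = (\<Sum>i\<in>?N. h i)"
      by (rule sum.mono_neutral_left) (use finN PN in \<open>auto simp: h_def\<close>)
    finally have s1: "(\<Sum>i\<in>P. e i) = (\<Sum>i\<in>?N. h i)" .
    have "(\<Sum>i\<in>?N. h (pt i)) = (\<Sum>i\<in>?N. h i)"
      by (rule sum.reindex_bij_witness[of _ pt pt]) (use ptN ptpt in auto)
    moreover have "(\<Sum>i\<in>?N. h (pt i)) = (\<Sum>i\<in>?N. - h i)"
    proof (intro sum.cong refl)
      fix i assume i: "i \<in> ?N"
      show "h (pt i) = - h i" using eneg[OF i] ptpt[OF i] unfolding h_def by auto
    qed
    ultimately have "(\<Sum>i\<in>?N. h i) = 0" by (simp add: sum_negf)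
    then have lhs: "(\<Sum>i\<in>P. e i) = 0" using s1 by simp
    have rhs: "(\<Sum>i\<in>P. exp_util ?N ?S ?u ?U i) = 0"
    proof (intro sum.neutral ballI)
      fix i assume "i \<in> P"
      then have i: "i \<in> ?N" using PN by auto
      show "exp_util ?N ?S ?u ?U i = 0"
      proof (cases "odd i")
        case True
        then show ?thesis using util_odd[OF n i True oneU] pay_unif_right[OF fm m] by simp
      next
        case False
        then show ?thesis using util_even[OF n i _ oneU] pay_unif_left[OF fm m] by simp
      qed
    qed
    show "(\<Sum>i\<in>P. exp_util ?N ?S ?u (deviate P \<tau> ?U) i) \<le> (\<Sum>i\<in>P. exp_util ?N ?S ?u ?U i)"
      using lhs rhs unfolding e_def \<rho>_def by simp
  qed
next
  note n = assms(1) and f1 = assms(4) and fm = assms(5)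
  have cop: "coprime f m" using assms(6) by (simp add: coprime_iff_gcd_eq_1)
  show "\<forall>\<sigma>. nash_equilibrium (rig_players n) (rig_strats m) (rig_util m f) \<sigma> \<longrightarrow>
              (\<forall>i\<in>rig_players n. \<forall>x\<in>rig_strats m i. \<sigma> i x = uniform_profile m i x)"
  proof (intro allI impI ballI)
    fix \<sigma> i x assume ne: "nash_equilibrium (rig_players n) (rig_strats m) (rig_util m f) \<sigma>"
      and i: "i \<in> rig_players n" and x: "x \<in> rig_strats m i"
    have xm: "x < m" using x by (simp add: rig_strats_def)
    show "\<sigma> i x = uniform_profile m i x"
    proof (cases "odd i")
      case True
      then show ?thesis using pair_unif[OF n f1 fm cop i True ne xm] by (simp add: uniform_profile_def)
    next
      case False
      have h: "odd (i - 1) \<and> i - 1 \<in> rig_players n \<and> i - 1 + 1 = i"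
        using i n False unfolding rig_players_def atLeastAtMost_iff by presburger
      then show ?thesis using pair_unif[OF n f1 fm cop _ _ ne xm, of "i-1"] by (simp add: uniform_profile_def)
    qed
  qed
qed

end
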